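(* Let $G$ and $H$ be graphs each having at least one edge. Then the lexicographic product $G\circ H$ is well-bicovered if and only if (i) $G$ is well-covered; and (ii) $H$ is both well-covered and well-bicovered, and $b(H)=2\alpha(H)$.
   Context: All graphs are finite and simple; "subgraph" means induced subgraph. $b(G)$ denotes the maximum order of an induced bipartite subgraph of $G$. A graph is well-bicovered if every vertex-inclusion-maximal induced bipartite subgraph has the same order. A graph is well-covered if every maximal independent set has the same cardinality, the independence number $\alpha$. The lexicographic product $G\circ H$ has vertex set $V(G)\times V(H)$, with $(u,v)$ adjacent to $(x,y)$ iff $ux\in E(G)$, or $u=x$ and $vy\in E(H)$. *)

theory Defs
  imports Main
begin

text \<open>A finite simple graph: finite vertex set V, symmetric irreflexive adjacency E
  whose edges lie inside V. Subgraphs are induced subgraphs, given by vertex subsets.\<close>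

definition graph :: "'a set \<Rightarrow> ('a \<Rightarrow> 'a \<Rightarrow> bool) \<Rightarrow> bool" where
  "graph V E \<longleftrightarrow> finite V \<and> (\<forall>x y. E x y \<longrightarrow> E y x) \<and> (\<forall>x. \<not> E x x)
     \<and> (\<forall>x y. E x y \<longrightarrow> x \<in> V \<and> y \<in> V)"

definition has_edge :: "'a set \<Rightarrow> ('a \<Rightarrow> 'a \<Rightarrow> bool) \<Rightarrow> bool" where
  "has_edge V E \<longleftrightarrow> (\<exists>x\<in>V. \<exists>y\<in>V. E x y)"

definition independent :: "'a set \<Rightarrow> ('a \<Rightarrow> 'a \<Rightarrow> bool) \<Rightarrow> 'a set \<Rightarrow> bool" where
  "independent V E S \<longleftrightarrow> S \<subseteq> V \<and> (\<forall>x\<in>S. \<forall>y\<in>S. \<not> E x y)"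

definition maximal_independent :: "'a set \<Rightarrow> ('a \<Rightarrow> 'a \<Rightarrow> bool) \<Rightarrow> 'a set \<Rightarrow> bool" where
  "maximal_independent V E S \<longleftrightarrow> independent V E S \<and>
     (\<forall>T. independent V E T \<and> S \<subseteq> T \<longrightarrow> T = S)"

definition well_covered :: "'a set \<Rightarrow> ('a \<Rightarrow> 'a \<Rightarrow> bool) \<Rightarrow> bool" where
  "well_covered V E \<longleftrightarrow> (\<forall>S T. maximal_independent V E S \<and> maximal_independent V E T
     \<longrightarrow> card S = card T)"

definition alpha :: "'a set \<Rightarrow> ('a \<Rightarrow> 'a \<Rightarrow> bool) \<Rightarrow> nat" where
  "alpha V E = Max (card ` {S. independent V E S})"

definition bipartite_set :: "'a set \<Rightarrow> ('a \<Rightarrow> 'a \<Rightarrow> bool) \<Rightarrow> 'a set \<Rightarrow> bool" where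
  "bipartite_set V E S \<longleftrightarrow> S \<subseteq> V \<and>
     (\<exists>A B. A \<union> B = S \<and> A \<inter> B = {} \<and> independent V E A \<and> independent V E B)"

definition maximal_bipartite_set :: "'a set \<Rightarrow> ('a \<Rightarrow> 'a \<Rightarrow> bool) \<Rightarrow> 'a set \<Rightarrow> bool" where
  "maximal_bipartite_set V E S \<longleftrightarrow> bipartite_set V E S \<and>
     (\<forall>T. bipartite_set V E T \<and> S \<subseteq> T \<longrightarrow> T = S)"

definition well_bicovered :: "'a set \<Rightarrow> ('a \<Rightarrow> 'a \<Rightarrow> bool) \<Rightarrow> bool" where
  "well_bicovered V E \<longleftrightarrow> (\<forall>S T. maximal_bipartite_set V E S \<and> maximal_bipartite_set V E T
     \<longrightarrow> card S = card T)"

definition bip_number :: "'a set \<Rightarrow> ('a \<Rightarrow> 'a \<Rightarrow> bool) \<Rightarrow> nat" where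
  "bip_number V E = Max (card ` {S. bipartite_set V E S})"

definition lex_vertices :: "'a set \<Rightarrow> 'b set \<Rightarrow> ('a \<times> 'b) set" where
  "lex_vertices V W = V \<times> W"

definition lex_edge :: "('a \<Rightarrow> 'a \<Rightarrow> bool) \<Rightarrow> ('b \<Rightarrow> 'b \<Rightarrow> bool) \<Rightarrow>
    ('a \<times> 'b) \<Rightarrow> ('a \<times> 'b) \<Rightarrow> bool" where
  "lex_edge E F p q \<longleftrightarrow> E (fst p) (fst q) \<or> (fst p = fst q \<and> F (snd p) (snd q))"

end

theory Submission
  imports Defs
begin



lemma graph_fin: "graph V E \<Longrightarrow> finite V" unfolding graph_def by simp
lemma graph_sym: "graph V E \<Longrightarrow> E x y \<Longrightarrow> E y x" unfolding graph_def by blast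
lemma graph_irr: "graph V E \<Longrightarrow> \<not> E x x" unfolding graph_def by blast
lemma graph_in: "graph V E \<Longrightarrow> E x y \<Longrightarrow> x \<in> V \<and> y \<in> V" unfolding graph_def by blast

lemma max_ext:
  assumes "finite V" "\<And>X. P X \<Longrightarrow> X \<subseteq> V" "P S"
  shows "\<exists>M. S \<subseteq> M \<and> P M \<and> (\<forall>T. P T \<and> M \<subseteq> T \<longrightarrow> T = M)"
proof -
  define C where "C = {X. P X \<and> S \<subseteq> X}"
  have "C \<subseteq> Pow V" using assms(2) unfolding C_def by blast
  then have fC: "finite C" using assms(1) finite_subset by blast
  have "S \<in> C" using assms(3) unfolding C_def by auto
  define m where "m = Max (card ` C)"
  have "m \<in> card ` C" unfolding m_def using fC \<open>S \<in> C\<close> by (intro Max_in) auto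
  then obtain M where M: "M \<in> C" "card M = m" by auto
  show ?thesis
  proof (intro exI conjI allI impI)
    show "S \<subseteq> M" "P M" using M unfolding C_def by auto
    fix T assume T: "P T \<and> M \<subseteq> T"
    then have "T \<in> C" using M unfolding C_def by auto
    then have "card T \<le> m" unfolding m_def using fC by auto
    moreover have "finite T" using T assms(1,2) finite_subset by blast
    ultimately show "T = M" using T M card_seteq[of T M] by simp
  qed
qed

lemma max_card_maximal:
  assumes "finite V" "\<And>X. P X \<Longrightarrow> X \<subseteq> V" "P {}"
  shows "\<exists>M. P M \<and> (\<forall>T. P T \<and> M \<subseteq> T \<longrightarrow> T = M) \<and> card M = Max (card ` {S. P S})"
proof -
  define C where "C = {X. P X}"
  have "C \<subseteq> Pow V" using assms(2) unfolding C_def by blast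
  then have fC: "finite C" using assms(1) finite_subset by blast
  have "{} \<in> C" using assms(3) unfolding C_def by simp
  define m where "m = Max (card ` C)"
  have "m \<in> card ` C" unfolding m_def using fC \<open>{} \<in> C\<close> by (intro Max_in) auto
  then obtain M where M: "M \<in> C" "card M = m" by blast
  show ?thesis
  proof (intro exI conjI allI impI)
    show "P M" using M unfolding C_def by simp
    show "card M = Max (card ` {S. P S})" using M unfolding m_def C_def by simp
    fix T assume T: "P T \<and> M \<subseteq> T"
    then have "T \<in> C" unfolding C_def by simp
    then have "card T \<le> m" unfolding m_def using fC by simp
    moreover have "finite T" using T assms(1,2) finite_subset by blast
    ultimately show "T = M" using T M card_seteq[of T M] by simp
  qed
qed

lemma wc_card:
  assumes "graph V E" "well_covered V E" "maximal_independent V E S"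
  shows "card S = alpha V E"
proof -
  have fV: "finite V" using assms(1) unfolding graph_def by simp
  have sub: "\<And>X. independent V E X \<Longrightarrow> X \<subseteq> V" unfolding independent_def by simp
  have e: "independent V E {}" unfolding independent_def by simp
  obtain M where M: "independent V E M" "\<forall>T. independent V E T \<and> M \<subseteq> T \<longrightarrow> T = M"
     "card M = Max (card ` {S. independent V E S})"
    using max_card_maximal[of V "independent V E", OF fV sub e] by blast
  then have "maximal_independent V E M" unfolding maximal_independent_def by simp
  then have "card S = card M" using assms(2,3) unfolding well_covered_def by blast
  then show ?thesis using M(3) unfolding alpha_def by simp
qed

lemma wbc_card:
  assumes "graph V E" "well_bicovered V E" "maximal_bipartite_set V E S"
  shows "card S = bip_number V E"
proof -
  have fV: "finite V" using assms(1) unfolding graph_def by simp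
  have sub: "\<And>X. bipartite_set V E X \<Longrightarrow> X \<subseteq> V" unfolding bipartite_set_def by simp
  have e: "bipartite_set V E {}" unfolding bipartite_set_def independent_def by simp
  obtain M where M: "bipartite_set V E M" "\<forall>T. bipartite_set V E T \<and> M \<subseteq> T \<longrightarrow> T = M"
     "card M = Max (card ` {S. bipartite_set V E S})"
    using max_card_maximal[of V "bipartite_set V E", OF fV sub e] by blast
  then have "maximal_bipartite_set V E M" unfolding maximal_bipartite_set_def by simp
  then have "card S = card M" using assms(2,3) unfolding well_bicovered_def by blast
  then show ?thesis using M(3) unfolding bip_number_def by simp
qed

lemma maxbip_has_edge:
  assumes "graph W F" "has_edge W F" "maximal_bipartite_set W F T"
  shows "\<exists>a\<in>T. \<exists>b\<in>T. F a b"
proof (rule ccontr)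
  assume no: "\<not> ?thesis"
  obtain y z where yz: "y \<in> W" "z \<in> W" "F y z" using assms(2) unfolding has_edge_def by auto
  have TW: "T \<subseteq> W" using assms(3) unfolding maximal_bipartite_set_def bipartite_set_def by auto
  have ins: "q \<in> T" if "q \<in> W" for q
  proof (rule ccontr)
    assume "q \<notin> T"
    have "bipartite_set W F (insert q T)"
      unfolding bipartite_set_def
    proof (intro conjI exI)
      show "insert q T \<subseteq> W" using TW that by auto
      show "T \<union> {q} = insert q T" by auto
      show "T \<inter> {q} = {}" using \<open>q \<notin> T\<close> by auto
      show "independent W F T" using TW no unfolding independent_def by auto
      show "independent W F {q}" using that graph_irr[OF assms(1)] unfolding independent_def by simp
    qed
    then have "insert q T = T" using assms(3) unfolding maximal_bipartite_set_def by blast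
    then show False using \<open>q \<notin> T\<close> by auto
  qed
  show False using ins[OF yz(1)] ins[OF yz(2)] yz(3) no by auto
qed




definition fib :: "('a \<times> 'b) set \<Rightarrow> 'a \<Rightarrow> 'b set" where
  "fib S u = {v. (u, v) \<in> S}"

definition iso :: "('a \<Rightarrow> 'a \<Rightarrow> bool) \<Rightarrow> 'a set \<Rightarrow> 'a set" where
  "iso E U = {u \<in> U. \<not> (\<exists>x\<in>U. E u x)}"

lemma bip_lex_D:
  assumes "bipartite_set (V \<times> W) (lex_edge E F) S"
  shows "bipartite_set V E (fst ` S)" "\<And>u. bipartite_set W F (fib S u)"
    "\<And>u x. u \<in> fst ` S \<Longrightarrow> x \<in> fst ` S \<Longrightarrow> E u x \<Longrightarrow> independent W F (fib S u)"
proof -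
  obtain A B where AB: "A \<union> B = S" "A \<inter> B = {}" "independent (V \<times> W) (lex_edge E F) A"
     "independent (V \<times> W) (lex_edge E F) B" and SV: "S \<subseteq> V \<times> W"
    using assms unfolding bipartite_set_def by blast
  have iA: "\<not> lex_edge E F p q" if "p \<in> A" "q \<in> A" for p q
    using AB(3) that unfolding independent_def by blast
  have iB: "\<not> lex_edge E F p q" if "p \<in> B" "q \<in> B" for p q
    using AB(4) that unfolding independent_def by blast
  define pick where "pick u = (SOME v. (u, v) \<in> S)" for u
  have pick: "(u, pick u) \<in> S" if "u \<in> fst ` S" for u
    unfolding pick_def using that by (metis (mono_tags, lifting) fst_conv image_iff prod.collapse someI)
  define PA where "PA = {u \<in> fst ` S. (u, pick u) \<in> A}"
  show "bipartite_set V E (fst ` S)"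
    unfolding bipartite_set_def
  proof (intro conjI exI)
    show "fst ` S \<subseteq> V" using SV by auto
    show "PA \<union> (fst ` S - PA) = fst ` S" unfolding PA_def by blast
    show "PA \<inter> (fst ` S - PA) = {}" by blast
    show "independent V E PA" unfolding independent_def
    proof (intro conjI ballI)
      show "PA \<subseteq> V" using SV unfolding PA_def by auto
      fix x y assume "x \<in> PA" "y \<in> PA"
      then have "(x, pick x) \<in> A" "(y, pick y) \<in> A" unfolding PA_def by auto
      then show "\<not> E x y" using iA unfolding lex_edge_def by fastforce
    qed
    show "independent V E (fst ` S - PA)" unfolding independent_def
    proof (intro conjI ballI)
      show "fst ` S - PA \<subseteq> V" using SV by auto
      fix x y assume xy: "x \<in> fst ` S - PA" "y \<in> fst ` S - PA"
      then have "(x, pick x) \<in> S" "(y, pick y) \<in> S" using pick by auto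
      then have "(x, pick x) \<in> B" "(y, pick y) \<in> B" using xy AB(1) unfolding PA_def by auto
      then show "\<not> E x y" using iB unfolding lex_edge_def by fastforce
    qed
  qed
  fix u
  show "bipartite_set W F (fib S u)"
    unfolding bipartite_set_def
  proof (intro conjI exI)
    show "fib S u \<subseteq> W" using SV unfolding fib_def by auto
    show "{v. (u, v) \<in> A} \<union> {v. (u, v) \<in> B} = fib S u" using AB(1) unfolding fib_def by auto
    show "{v. (u, v) \<in> A} \<inter> {v. (u, v) \<in> B} = {}" using AB(2) by auto
    show "independent W F {v. (u, v) \<in> A}" unfolding independent_def
    proof (intro conjI ballI)
      show "{v. (u, v) \<in> A} \<subseteq> W" using SV AB(1) by auto
      fix x y assume "x \<in> {v. (u, v) \<in> A}" "y \<in> {v. (u, v) \<in> A}"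
      then show "\<not> F x y" using iA[of "(u,x)" "(u,y)"] unfolding lex_edge_def by simp
    qed
    show "independent W F {v. (u, v) \<in> B}" unfolding independent_def
    proof (intro conjI ballI)
      show "{v. (u, v) \<in> B} \<subseteq> W" using SV AB(1) by auto
      fix x y assume "x \<in> {v. (u, v) \<in> B}" "y \<in> {v. (u, v) \<in> B}"
      then show "\<not> F x y" using iB[of "(u,x)" "(u,y)"] unfolding lex_edge_def by simp
    qed
  qed
  fix x
  assume ux: "u \<in> fst ` S" "x \<in> fst ` S" "E u x"
  obtain w where w: "(x, w) \<in> S" using ux(2) by force
  show "independent W F (fib S u)" unfolding independent_def
  proof (intro conjI ballI)
    show "fib S u \<subseteq> W" using SV unfolding fib_def by auto
    fix a b assume ab: "a \<in> fib S u" "b \<in> fib S u"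
    show "\<not> F a b"
    proof
      assume Fab: "F a b"
      have S3: "(u, a) \<in> S" "(u, b) \<in> S" using ab unfolding fib_def by auto
      have e1: "lex_edge E F (u, a) (u, b)" using Fab unfolding lex_edge_def by simp
      have e2: "lex_edge E F (u, a) (x, w)" "lex_edge E F (u, b) (x, w)"
        using ux(3) unfolding lex_edge_def by simp_all
      have "(u, a) \<in> A \<or> (u, a) \<in> B" "(u, b) \<in> A \<or> (u, b) \<in> B" "(x, w) \<in> A \<or> (x, w) \<in> B"
        using S3 w AB(1) by auto
      then show False using e1 e2 iA iB by metis
    qed
  qed
qed




lemma bip_lex_I:
  assumes G: "graph V E" and SV: "S \<subseteq> V \<times> W" and U: "bipartite_set V E (fst ` S)"
    and fb: "\<And>u. u \<in> fst ` S \<Longrightarrow> bipartite_set W F (fib S u)"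
    and fi: "\<And>u. u \<in> fst ` S \<Longrightarrow> u \<notin> iso E (fst ` S) \<Longrightarrow> independent W F (fib S u)"
  shows "bipartite_set (V \<times> W) (lex_edge E F) S"
proof -
  let ?U = "fst ` S"
  let ?I = "iso E ?U"
  obtain P Q where PQ: "P \<union> Q = ?U" "P \<inter> Q = {}" "independent V E P" "independent V E Q"
    using U unfolding bipartite_set_def by blast
  define Qp where "Qp u XY \<longleftrightarrow> fst XY \<union> snd XY = fib S u \<and> fst XY \<inter> snd XY = {} \<and>
      independent W F (fst XY) \<and> independent W F (snd XY)" for u XY
  have ex: "\<exists>XY. Qp u XY" if uU: "u \<in> ?U" for u
  proof -
    obtain A B where "A \<union> B = fib S u" "A \<inter> B = {}" "independent W F A" "independent W F B"
      using fb[OF uU] unfolding bipartite_set_def by blast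
    then show ?thesis unfolding Qp_def by (intro exI[of _ "(A, B)"]) simp
  qed
  then have "\<forall>u\<in>?U. \<exists>XY. Qp u XY" by blast
  from bchoice[OF this] obtain XY where XY0: "\<forall>u\<in>?U. Qp u (XY u)" by blast
  have XY: "fst (XY u) \<union> snd (XY u) = fib S u \<and> fst (XY u) \<inter> snd (XY u) = {} \<and>
      independent W F (fst (XY u)) \<and> independent W F (snd (XY u))" if "u \<in> ?U" for u
    using XY0 that unfolding Qp_def by blast
  define SA where "SA = {p \<in> S. (fst p \<notin> ?I \<and> fst p \<in> P) \<or> (fst p \<in> ?I \<and> snd p \<in> fst (XY (fst p)))}"
  define SB where "SB = {p \<in> S. (fst p \<notin> ?I \<and> fst p \<in> Q) \<or> (fst p \<in> ?I \<and> snd p \<in> snd (XY (fst p)))}"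
  have isoD: "\<not> E u x" if "u \<in> ?I" "x \<in> ?U" for u x using that unfolding iso_def by blast
  have isoD2: "\<not> E x u" if "u \<in> ?I" "x \<in> ?U" for u x using that isoD graph_sym[OF G] by blast
  have nisoF: "\<not> F a b" if "u \<in> ?U" "u \<notin> ?I" "(u, a) \<in> S" "(u, b) \<in> S" for u a b
    using fi[OF that(1,2)] that(3,4) unfolding independent_def fib_def by blast
  have Pi: "\<not> E x y" if "x \<in> P" "y \<in> P" for x y using PQ(3) that unfolding independent_def by blast
  have Qi: "\<not> E x y" if "x \<in> Q" "y \<in> Q" for x y using PQ(4) that unfolding independent_def by blast
  have Xi: "\<not> F a b" if "u \<in> ?U" "a \<in> fst (XY u)" "b \<in> fst (XY u)" for u a b
    using XY[OF that(1)] that(2,3) unfolding independent_def by blast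
  have Yi: "\<not> F a b" if "u \<in> ?U" "a \<in> snd (XY u)" "b \<in> snd (XY u)" for u a b
    using XY[OF that(1)] that(2,3) unfolding independent_def by blast
  show ?thesis unfolding bipartite_set_def
  proof (intro conjI exI)
    show "S \<subseteq> V \<times> W" by fact
    show "SA \<union> SB = S"
    proof
      show "SA \<union> SB \<subseteq> S" unfolding SA_def SB_def by blast
      show "S \<subseteq> SA \<union> SB"
      proof
        fix p assume p: "p \<in> S"
        then have u: "fst p \<in> ?U" by simp
        have "snd p \<in> fib S (fst p)" using p unfolding fib_def by simp
        then show "p \<in> SA \<union> SB" using XY[OF u] PQ(1) u p unfolding SA_def SB_def by blast
      qed
    qed
    show "SA \<inter> SB = {}"
    proof (rule ccontr)
      assume "SA \<inter> SB \<noteq> {}"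
      then obtain p where p: "p \<in> SA" "p \<in> SB" by blast
      then have u: "fst p \<in> ?U" unfolding SA_def by auto
      show False using p XY[OF u] PQ(2) unfolding SA_def SB_def by blast
    qed
    show "independent (V \<times> W) (lex_edge E F) SA" unfolding independent_def
    proof (intro conjI ballI)
      show "SA \<subseteq> V \<times> W" using SV unfolding SA_def by blast
      fix p q assume pq: "p \<in> SA" "q \<in> SA"
      then have pS: "p \<in> S" "q \<in> S" and u: "fst p \<in> ?U" "fst q \<in> ?U" unfolding SA_def by auto
      show "\<not> lex_edge E F p q" unfolding lex_edge_def
      proof
        assume "E (fst p) (fst q) \<or> fst p = fst q \<and> F (snd p) (snd q)"
        then show False
        proof
          assume e: "E (fst p) (fst q)"
          then have "fst p \<notin> ?I" "fst q \<notin> ?I" using isoD[OF _ u(2)] isoD2[OF _ u(1)] by blast+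
          then have "fst p \<in> P" "fst q \<in> P" using pq unfolding SA_def by auto
          then show False using Pi e by blast
        next
          assume e: "fst p = fst q \<and> F (snd p) (snd q)"
          show False
          proof (cases "fst p \<in> ?I")
            case True
            then show False using pq e Xi[OF u(1)] unfolding SA_def by auto
          next
            case False
            then show False using nisoF[OF u(1) False, of "snd p" "snd q"] pS e by (metis prod.collapse)
          qed
        qed
      qed
    qed
    show "independent (V \<times> W) (lex_edge E F) SB" unfolding independent_def
    proof (intro conjI ballI)
      show "SB \<subseteq> V \<times> W" using SV unfolding SB_def by blast
      fix p q assume pq: "p \<in> SB" "q \<in> SB"
      then have pS: "p \<in> S" "q \<in> S" and u: "fst p \<in> ?U" "fst q \<in> ?U" unfolding SB_def by auto
      show "\<not> lex_edge E F p q" unfolding lex_edge_def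
      proof
        assume "E (fst p) (fst q) \<or> fst p = fst q \<and> F (snd p) (snd q)"
        then show False
        proof
          assume e: "E (fst p) (fst q)"
          then have "fst p \<notin> ?I" "fst q \<notin> ?I" using isoD[OF _ u(2)] isoD2[OF _ u(1)] by blast+
          then have "fst p \<in> Q" "fst q \<in> Q" using pq unfolding SB_def by auto
          then show False using Qi e by blast
        next
          assume e: "fst p = fst q \<and> F (snd p) (snd q)"
          show False
          proof (cases "fst p \<in> ?I")
            case True
            then show False using pq e Yi[OF u(1)] unfolding SB_def by auto
          next
            case False
            then show False using nisoF[OF u(1) False, of "snd p" "snd q"] pS e by (metis prod.collapse)
          qed
        qed
      qed
    qed
  qed
qed




lemma indep_bip: "independent W F T \<Longrightarrow> bipartite_set W F T"
  unfolding bipartite_set_def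
proof -
  assume T: "independent W F T"
  show "T \<subseteq> W \<and> (\<exists>A B. A \<union> B = T \<and> A \<inter> B = {} \<and> independent W F A \<and> independent W F B)"
  proof (intro conjI exI)
    show "T \<subseteq> W" using T unfolding independent_def by simp
    show "T \<union> {} = T" "T \<inter> {} = {}" by simp_all
    show "independent W F T" by fact
    show "independent W F {}" unfolding independent_def by simp
  qed
qed

lemma bip_sub: "bipartite_set V E S \<Longrightarrow> S \<subseteq> V" unfolding bipartite_set_def by simp

lemma niso_ex: "u \<in> U \<Longrightarrow> u \<notin> iso E U \<Longrightarrow> \<exists>x\<in>U. E u x" unfolding iso_def by blast

lemma replace_fiber:
  assumes G: "graph V E" and bip: "bipartite_set (V \<times> W) (lex_edge E F) S"
    and u: "u \<in> fst ` S" and T: "T \<noteq> {}" "bipartite_set W F T"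
    and Ti: "u \<notin> iso E (fst ` S) \<Longrightarrow> independent W F T"
  shows "bipartite_set (V \<times> W) (lex_edge E F) ({p \<in> S. fst p \<noteq> u} \<union> {u} \<times> T)"
proof -
  define S' where "S' = {p \<in> S. fst p \<noteq> u} \<union> {u} \<times> T"
  have TW: "T \<subseteq> W" using T(2) by (rule bip_sub)
  have SV: "S \<subseteq> V \<times> W" using bip by (rule bip_sub)
  have uV: "u \<in> V" using u SV by auto
  have fst': "fst ` S' = fst ` S"
  proof
    show "fst ` S' \<subseteq> fst ` S" using u unfolding S'_def by force
    show "fst ` S \<subseteq> fst ` S'"
    proof
      fix x assume "x \<in> fst ` S"
      then obtain y where xy: "(x, y) \<in> S" by force
      obtain t where "t \<in> T" using T(1) by blast
      show "x \<in> fst ` S'"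
      proof (cases "x = u")
        case True
        then have "(x, t) \<in> S'" using \<open>t \<in> T\<close> unfolding S'_def by simp
        then show ?thesis by force
      next
        case False
        then have "(x, y) \<in> S'" using xy unfolding S'_def by simp
        then show ?thesis by force
      qed
    qed
  qed
  have fib': "fib S' x = (if x = u then T else fib S x)" for x
    unfolding S'_def fib_def by auto
  have "bipartite_set (V \<times> W) (lex_edge E F) S'"
  proof (rule bip_lex_I[OF G])
    show "S' \<subseteq> V \<times> W" using SV TW uV unfolding S'_def by auto
    show "bipartite_set V E (fst ` S')" unfolding fst' using bip_lex_D(1)[OF bip] .
    fix x assume x: "x \<in> fst ` S'"
    show "bipartite_set W F (fib S' x)"
      unfolding fib' using T(2) bip_lex_D(2)[OF bip] by simp
    assume xi: "x \<notin> iso E (fst ` S')"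
    show "independent W F (fib S' x)"
    proof (cases "x = u")
      case True
      then show ?thesis unfolding fib' using Ti xi fst' by simp
    next
      case False
      obtain z where "z \<in> fst ` S" "E x z" using niso_ex[of x "fst ` S" E] x xi unfolding fst' by blast
      then show ?thesis unfolding fib' using False bip_lex_D(3)[OF bip, of x z] x fst' by simp
    qed
  qed
  then show ?thesis unfolding S'_def .
qed

lemma fib_nonempty: "u \<in> fst ` S \<Longrightarrow> fib S u \<noteq> {}" unfolding fib_def by force

lemma fib_max:
  assumes G: "graph V E" and S: "maximal_bipartite_set (V \<times> W) (lex_edge E F) S"
    and u: "u \<in> fst ` S"
  shows "u \<in> iso E (fst ` S) \<Longrightarrow> maximal_bipartite_set W F (fib S u)"
    and "u \<notin> iso E (fst ` S) \<Longrightarrow> maximal_independent W F (fib S u)"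
proof -
  have bip: "bipartite_set (V \<times> W) (lex_edge E F) S" and mx: "\<And>T. bipartite_set (V \<times> W) (lex_edge E F) T \<Longrightarrow> S \<subseteq> T \<Longrightarrow> T = S"
    using S unfolding maximal_bipartite_set_def by blast+
  have key: "T = fib S u" if T: "bipartite_set W F T" "fib S u \<subseteq> T" "u \<notin> iso E (fst ` S) \<Longrightarrow> independent W F T" for T
  proof -
    have "T \<noteq> {}" using T(2) fib_nonempty[OF u] by blast
    then have b': "bipartite_set (V \<times> W) (lex_edge E F) ({p \<in> S. fst p \<noteq> u} \<union> {u} \<times> T)"
      using replace_fiber[OF G bip u _ T(1) T(3)] by blast
    have "S \<subseteq> {p \<in> S. fst p \<noteq> u} \<union> {u} \<times> T"
    proof
      fix p assume p: "p \<in> S"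
      show "p \<in> {p \<in> S. fst p \<noteq> u} \<union> {u} \<times> T"
      proof (cases "fst p = u")
        case True
        then have "snd p \<in> fib S u" using p unfolding fib_def by (metis mem_Collect_eq prod.collapse)
        then show ?thesis using True T(2) by (metis UnI2 mem_Sigma_iff prod.collapse singletonI subsetD)
      next
        case False
        then show ?thesis using p by simp
      qed
    qed
    then have eq: "{p \<in> S. fst p \<noteq> u} \<union> {u} \<times> T = S" using mx[OF b'] by blast
    show "T = fib S u"
    proof
      show "T \<subseteq> fib S u"
      proof
        fix v assume "v \<in> T"
        then have "(u, v) \<in> {p \<in> S. fst p \<noteq> u} \<union> {u} \<times> T" by simp
        then show "v \<in> fib S u" unfolding eq fib_def by simp
      qed
      show "fib S u \<subseteq> T" by fact
    qed
  qed
  show "maximal_bipartite_set W F (fib S u)" if "u \<in> iso E (fst ` S)"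
    unfolding maximal_bipartite_set_def
    using bip_lex_D(2)[OF bip, of u] key that by blast
  show "maximal_independent W F (fib S u)" if ni: "u \<notin> iso E (fst ` S)"
  proof -
    obtain z where "z \<in> fst ` S" "E u z" using niso_ex[OF u ni] by blast
    then have ind: "independent W F (fib S u)" using bip_lex_D(3)[OF bip u] by blast
    show ?thesis unfolding maximal_independent_def
      using ind key indep_bip by blast
  qed
qed




lemma indep_single: "graph W F \<Longrightarrow> w \<in> W \<Longrightarrow> independent W F {w}"
  unfolding independent_def using graph_irr by fastforce

lemma side_max:
  assumes G: "graph V E" and H: "graph W F" and w: "w \<in> W"
    and S: "maximal_bipartite_set (V \<times> W) (lex_edge E F) S"
    and PQ: "P \<union> Q = fst ` S" "P \<inter> Q = {}" "independent V E P" "independent V E Q"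
  shows "maximal_independent V E (P \<union> iso E (fst ` S))"
proof -
  let ?U = "fst ` S"
  let ?I = "iso E ?U"
  have bip: "bipartite_set (V \<times> W) (lex_edge E F) S" and mx: "\<And>T. bipartite_set (V \<times> W) (lex_edge E F) T \<Longrightarrow> S \<subseteq> T \<Longrightarrow> T = S"
    using S unfolding maximal_bipartite_set_def by blast+
  have SV: "S \<subseteq> V \<times> W" using bip by (rule bip_sub)
  have UV: "?U \<subseteq> V" using SV by auto
  have IU: "?I \<subseteq> ?U" unfolding iso_def by blast
  have isoD: "\<not> E u x" if "u \<in> ?I" "x \<in> ?U" for u x using that unfolding iso_def by blast
  have isoD2: "\<not> E x u" if "u \<in> ?I" "x \<in> ?U" for u x using that isoD graph_sym[OF G] by blast
  have Pi: "\<not> E x y" if "x \<in> P" "y \<in> P" for x y using PQ(3) that unfolding independent_def by blast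
  have Qi: "\<not> E x y" if "x \<in> Q" "y \<in> Q" for x y using PQ(4) that unfolding independent_def by blast
  have ind: "independent V E (P \<union> ?I)" unfolding independent_def
  proof (intro conjI ballI)
    show "P \<union> ?I \<subseteq> V" using PQ(1) IU UV by blast
    fix x y assume xy: "x \<in> P \<union> ?I" "y \<in> P \<union> ?I"
    have "x \<in> ?U" "y \<in> ?U" using xy PQ(1) IU by blast+
    then show "\<not> E x y" using xy Pi isoD isoD2 by blast
  qed
  show ?thesis unfolding maximal_independent_def
  proof (intro conjI allI impI ind)
    fix T assume T: "independent V E T \<and> P \<union> ?I \<subseteq> T"
    have Ti: "\<not> E x y" if "x \<in> T" "y \<in> T" for x y using T that unfolding independent_def by blast
    have "T \<subseteq> P \<union> ?I"
    proof
      fix x assume xT: "x \<in> T"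
      show "x \<in> P \<union> ?I"
      proof (rule ccontr)
        assume xn: "x \<notin> P \<union> ?I"
        have noadj: "\<not> E x y" "\<not> E y x" if "y \<in> P \<union> ?I" for y
          using Ti[OF xT] Ti[OF _ xT] that T by blast+
        show False
        proof (cases "x \<in> ?U")
          case True
          then have "x \<in> Q" "x \<notin> ?I" using xn PQ(1) by blast+
          then obtain z where z: "z \<in> ?U" "E x z" using niso_ex[OF True] by blast
          show False
          proof (cases "z \<in> P")
            case True
            then show False using noadj(1)[of z] z by blast
          next
            case False
            then have "z \<in> Q" using z PQ(1) by blast
            then show False using Qi \<open>x \<in> Q\<close> z by blast
          qed
        next
          case False
          have xV: "x \<in> V" using xT T unfolding independent_def by blast
          define S' where "S' = insert (x, w) S"
          have fst': "fst ` S' = insert x ?U" unfolding S'_def by simp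
          have fib': "fib S' y = (if y = x then {w} else fib S y)" for y
            unfolding S'_def fib_def using False by force
          have "bipartite_set (V \<times> W) (lex_edge E F) S'"
          proof (rule bip_lex_I[OF G])
            show "S' \<subseteq> V \<times> W" using SV xV w unfolding S'_def by simp
            show "bipartite_set V E (fst ` S')" unfolding bipartite_set_def fst'
            proof (intro conjI exI)
              show "insert x ?U \<subseteq> V" using UV xV by simp
              show "insert x P \<union> Q = insert x ?U" using PQ(1) by blast
              show "insert x P \<inter> Q = {}" using PQ(1,2) False by blast
              show "independent V E Q" by fact
              show "independent V E (insert x P)" unfolding independent_def
              proof (intro conjI ballI)
                show "insert x P \<subseteq> V" using xV PQ(3) unfolding independent_def by simp
                fix a b assume ab: "a \<in> insert x P" "b \<in> insert x P"
                show "\<not> E a b" using ab Pi noadj graph_irr[OF G] by blast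
              qed
            qed
            fix y assume y: "y \<in> fst ` S'"
            show "bipartite_set W F (fib S' y)"
              unfolding fib' using indep_bip[OF indep_single[OF H w]] bip_lex_D(2)[OF bip] by simp
            assume yi: "y \<notin> iso E (fst ` S')"
            show "independent W F (fib S' y)"
            proof (cases "y = x")
              case True
              then show ?thesis unfolding fib' using indep_single[OF H w] by simp
            next
              case False
              then have yU: "y \<in> ?U" using y fst' by simp
              obtain z where z: "z \<in> insert x ?U" "E y z" using niso_ex[OF y yi] fst' by auto
              have "\<exists>z'\<in>?U. E y z'"
              proof (cases "z = x")
                case True
                then have "y \<notin> ?I" using noadj(2)[of y] z by blast
                then show ?thesis using niso_ex[OF yU] by blast
              next
                case False
                then show ?thesis using z by blast
              qed
              then obtain z' where "z' \<in> ?U" "E y z'" by blast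
              then show ?thesis unfolding fib' using False bip_lex_D(3)[OF bip yU] by simp
            qed
          qed
          moreover have "S \<subseteq> S'" unfolding S'_def by blast
          ultimately have "S' = S" using mx by blast
          then have "x \<in> ?U" unfolding S'_def by force
          then show False using False by blast
        qed
      qed
    qed
    then show "T = P \<union> ?I" using T by blast
  qed
qed




lemma S_Sigma: "S = Sigma (fst ` S) (fib S)"
  unfolding fib_def by force

lemma card_formula:
  assumes G: "graph V E" and H: "graph W F" and w: "w \<in> W"
    and S: "maximal_bipartite_set (V \<times> W) (lex_edge E F) S"
    and wcG: "well_covered V E" and wcH: "well_covered W F" and wbcH: "well_bicovered W F"
  shows "card S = card (iso E (fst ` S)) * bip_number W F
           + (card (fst ` S) - card (iso E (fst ` S))) * alpha W F"
    and "card (fst ` S) + card (iso E (fst ` S)) = 2 * alpha V E"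
proof -
  let ?U = "fst ` S"
  let ?I = "iso E ?U"
  have bip: "bipartite_set (V \<times> W) (lex_edge E F) S"
    using S unfolding maximal_bipartite_set_def by blast
  have SV: "S \<subseteq> V \<times> W" using bip by (rule bip_sub)
  have UV: "?U \<subseteq> V" using SV by auto
  have fU: "finite ?U" using graph_fin[OF G] UV finite_subset by blast
  have fW: "finite W" using graph_fin[OF H] .
  have IU: "?I \<subseteq> ?U" unfolding iso_def by blast
  have fI: "finite ?I" using fU IU finite_subset by blast
  have ffib: "\<forall>u\<in>?U. finite (fib S u)"
  proof
    fix u assume "u \<in> ?U"
    have "fib S u \<subseteq> W" using SV unfolding fib_def by auto
    then show "finite (fib S u)" using fW finite_subset by blast
  qed
  have "card S = card (Sigma ?U (fib S))" using S_Sigma[of S] by simp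
  also have "\<dots> = (\<Sum>u\<in>?U. card (fib S u))" using card_SigmaI[OF fU ffib] .
  also have "\<dots> = (\<Sum>u\<in>?U - ?I. card (fib S u)) + (\<Sum>u\<in>?I. card (fib S u))"
    using sum.subset_diff[OF IU fU] .
  also have "(\<Sum>u\<in>?I. card (fib S u)) = (\<Sum>u\<in>?I. bip_number W F)"
  proof (rule sum.cong[OF refl])
    fix u assume u: "u \<in> ?I"
    then have "u \<in> ?U" using IU by blast
    then show "card (fib S u) = bip_number W F"
      using wbc_card[OF H wbcH fib_max(1)[OF G S _ u]] by simp
  qed
  also have "(\<Sum>u\<in>?U - ?I. card (fib S u)) = (\<Sum>u\<in>?U - ?I. alpha W F)"
  proof (rule sum.cong[OF refl])
    fix u assume u: "u \<in> ?U - ?I"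
    then show "card (fib S u) = alpha W F"
      using wc_card[OF H wcH fib_max(2)[OF G S]] by simp
  qed
  finally show "card S = card ?I * bip_number W F + (card ?U - card ?I) * alpha W F"
    using card_Diff_subset[OF fI IU] by simp
  obtain P Q where PQ: "P \<union> Q = ?U" "P \<inter> Q = {}" "independent V E P" "independent V E Q"
    using bip_lex_D(1)[OF bip] unfolding bipartite_set_def by blast
  have m1: "maximal_independent V E (P \<union> ?I)" using side_max[OF G H w S PQ] .
  have m2: "maximal_independent V E (Q \<union> ?I)"
    using side_max[OF G H w S, of Q P] PQ by (simp add: Un_commute Int_commute)
  have c1: "card (P \<union> ?I) = alpha V E" using wc_card[OF G wcG m1] .
  have c2: "card (Q \<union> ?I) = alpha V E" using wc_card[OF G wcG m2] .
  have fP: "finite (P \<union> ?I)" "finite (Q \<union> ?I)" using fU PQ(1) IU finite_subset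
    by (metis Un_upper1 Un_upper2 le_sup_iff)+
  have u1: "(P \<union> ?I) \<union> (Q \<union> ?I) = ?U" using PQ(1) IU by blast
  have u2: "(P \<union> ?I) \<inter> (Q \<union> ?I) = ?I" using PQ(2) by blast
  show "card ?U + card ?I = 2 * alpha V E"
    using card_Un_Int[OF fP] c1 c2 u1 u2 by simp
qed




lemma maxind_nonempty:
  assumes "w \<in> W" "graph W F" "maximal_independent W F J" shows "J \<noteq> {}"
proof
  assume "J = {}"
  then have "{w} = J" using assms(3) indep_single[OF assms(2,1)] unfolding maximal_independent_def by blast
  then show False using \<open>J = {}\<close> by blast
qed

lemma prod_max:
  assumes G: "graph V E" and H: "graph W F" and hH: "has_edge W F"
    and A: "maximal_independent V E A" and T: "maximal_bipartite_set W F T"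
  shows "maximal_bipartite_set (V \<times> W) (lex_edge E F) (A \<times> T)"
proof -
  obtain b c where bc: "b \<in> T" "c \<in> T" "F b c" using maxbip_has_edge[OF H hH T] by blast
  have Tne: "T \<noteq> {}" using bc by blast
  have Aind: "independent V E A" using A unfolding maximal_independent_def by blast
  have Ai: "\<not> E a a'" if "a \<in> A" "a' \<in> A" for a a' using Aind that unfolding independent_def by blast
  have TW: "T \<subseteq> W" using T unfolding maximal_bipartite_set_def bipartite_set_def by blast
  have AV: "A \<subseteq> V" using Aind unfolding independent_def by blast
  have fstAT: "fst ` (A \<times> T) = A" using Tne by simp
  have fibAT: "fib (A \<times> T) u = (if u \<in> A then T else {})" for u unfolding fib_def by auto
  have Tbip: "bipartite_set W F T" using T unfolding maximal_bipartite_set_def by blast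
  have bip: "bipartite_set (V \<times> W) (lex_edge E F) (A \<times> T)"
  proof (rule bip_lex_I[OF G])
    show "A \<times> T \<subseteq> V \<times> W" using AV TW by blast
    show "bipartite_set V E (fst ` (A \<times> T))" unfolding fstAT using indep_bip[OF Aind] .
    fix u assume u: "u \<in> fst ` (A \<times> T)"
    then show "bipartite_set W F (fib (A \<times> T) u)" unfolding fibAT fstAT using Tbip by simp
    assume "u \<notin> iso E (fst ` (A \<times> T))"
    then obtain z where "z \<in> A" "E u z" using niso_ex[OF u] unfolding fstAT by blast
    then show "independent W F (fib (A \<times> T) u)" using Ai u unfolding fstAT by blast
  qed
  show ?thesis unfolding maximal_bipartite_set_def
  proof (intro conjI allI impI bip)
    fix R assume R: "bipartite_set (V \<times> W) (lex_edge E F) R \<and> A \<times> T \<subseteq> R"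
    have Rb: "bipartite_set (V \<times> W) (lex_edge E F) R" using R by blast
    have RV: "R \<subseteq> V \<times> W" using Rb by (rule bip_sub)
    have "R \<subseteq> A \<times> T"
    proof
      fix p assume pR: "p \<in> R"
      obtain z v where p: "p = (z, v)" by (cases p)
      show "p \<in> A \<times> T"
      proof (cases "z \<in> A")
        case True
        have "T \<subseteq> fib R z" using R True unfolding fib_def by blast
        then have "fib R z = T" using T bip_lex_D(2)[OF Rb, of z] unfolding maximal_bipartite_set_def by blast
        then have "v \<in> T" using pR p unfolding fib_def by blast
        then show ?thesis using True p by simp
      next
        case False
        have zV: "z \<in> V" using pR p RV by blast
        have "\<exists>a\<in>A. E a z"
        proof (rule ccontr)
          assume no: "\<not> (\<exists>a\<in>A. E a z)"
          then have no2: "\<not> E z a" if "a \<in> A" for a using graph_sym[OF G] that by blast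
          have "independent V E (insert z A)" unfolding independent_def
          proof (intro conjI ballI)
            show "insert z A \<subseteq> V" using zV AV by blast
            fix a a' assume "a \<in> insert z A" "a' \<in> insert z A"
            then show "\<not> E a a'" using no no2 Ai graph_irr[OF G] by blast
          qed
          then have "insert z A = A" using A unfolding maximal_independent_def by blast
          then show False using False by blast
        qed
        then obtain a where a: "a \<in> A" "E a z" by blast
        have "a \<in> fst ` R" using a(1) bc(1) R by force
        moreover have "z \<in> fst ` R" using pR p by force
        ultimately have "independent W F (fib R a)" using bip_lex_D(3)[OF Rb _ _ a(2)] by blast
        moreover have "b \<in> fib R a" "c \<in> fib R a" using R a(1) bc unfolding fib_def by blast+
        ultimately show ?thesis using bc(3) unfolding independent_def by blast
      qed
    qed
    then show "R = A \<times> T" using R by blast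
  qed
qed

lemma swap_max:
  assumes G: "graph V E" and H: "graph W F" and w: "w \<in> W"
    and S: "maximal_bipartite_set (V \<times> W) (lex_edge E F) S"
    and x: "x \<in> fst ` S" "x \<notin> iso E (fst ` S)" and J1: "maximal_independent W F J1"
  shows "maximal_bipartite_set (V \<times> W) (lex_edge E F) ({p \<in> S. fst p \<noteq> x} \<union> {x} \<times> J1)"
proof -
  define S1 where "S1 = {p \<in> S. fst p \<noteq> x} \<union> {x} \<times> J1"
  define J where "J = fib S x"
  have bip: "bipartite_set (V \<times> W) (lex_edge E F) S" and mx: "\<And>T. bipartite_set (V \<times> W) (lex_edge E F) T \<Longrightarrow> S \<subseteq> T \<Longrightarrow> T = S"
    using S unfolding maximal_bipartite_set_def by blast+
  have J1ne: "J1 \<noteq> {}" using maxind_nonempty[OF w H J1] .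
  have J1i: "independent W F J1" using J1 unfolding maximal_independent_def by blast
  have Jm: "maximal_independent W F J" unfolding J_def using fib_max(2)[OF G S x] .
  have Ji: "independent W F J" using Jm unfolding maximal_independent_def by blast
  have Jne: "J \<noteq> {}" unfolding J_def using fib_nonempty[OF x(1)] .
  have S1b: "bipartite_set (V \<times> W) (lex_edge E F) S1"
    unfolding S1_def using replace_fiber[OF G bip x(1) J1ne indep_bip[OF J1i]] J1i by blast
  obtain z where z: "z \<in> fst ` S" "E x z" using niso_ex[OF x] by blast
  have zx: "z \<noteq> x" using z(2) graph_irr[OF G] by blast
  show ?thesis unfolding S1_def[symmetric] maximal_bipartite_set_def
  proof (intro conjI allI impI S1b)
    fix T assume T: "bipartite_set (V \<times> W) (lex_edge E F) T \<and> S1 \<subseteq> T"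
    have Tb: "bipartite_set (V \<times> W) (lex_edge E F) T" using T by blast
    obtain vz where vz: "(z, vz) \<in> S" using z(1) by force
    then have "(z, vz) \<in> S1" using zx unfolding S1_def by simp
    then have "(z, vz) \<in> T" using T by blast
    then have zT: "z \<in> fst ` T" by force
    obtain j where "j \<in> J1" using J1ne by blast
    then have "(x, j) \<in> S1" unfolding S1_def by simp
    then have "(x, j) \<in> T" using T by blast
    then have xT: "x \<in> fst ` T" by force
    have xTi: "x \<notin> iso E (fst ` T)" using zT z(2) unfolding iso_def by blast
    have fTi: "independent W F (fib T x)" using bip_lex_D(3)[OF Tb xT zT z(2)] .
    have T2b: "bipartite_set (V \<times> W) (lex_edge E F) ({p \<in> T. fst p \<noteq> x} \<union> {x} \<times> J)"
      using replace_fiber[OF G Tb xT Jne indep_bip[OF Ji]] Ji by blast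
    have "S \<subseteq> {p \<in> T. fst p \<noteq> x} \<union> {x} \<times> J"
    proof
      fix p assume p: "p \<in> S"
      obtain a b where ab: "p = (a, b)" by (cases p)
      show "p \<in> {p \<in> T. fst p \<noteq> x} \<union> {x} \<times> J"
      proof (cases "a = x")
        case True
        then show ?thesis using p ab unfolding J_def fib_def by simp
      next
        case False
        then have "p \<in> S1" using p ab unfolding S1_def by simp
        then have "p \<in> T" using T by blast
        then show ?thesis using False ab by simp
      qed
    qed
    then have T2: "{p \<in> T. fst p \<noteq> x} \<union> {x} \<times> J = S" using mx[OF T2b] by blast
    have "T \<subseteq> S1"
    proof
      fix p assume p: "p \<in> T"
      obtain a b where ab: "p = (a, b)" by (cases p)
      show "p \<in> S1"
      proof (cases "a = x")
        case True
        have "J1 \<subseteq> fib T x"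
        proof
          fix v assume "v \<in> J1"
          then have "(x, v) \<in> S1" unfolding S1_def by simp
          then show "v \<in> fib T x" using T unfolding fib_def by blast
        qed
        then have "fib T x = J1" using J1 fTi unfolding maximal_independent_def by blast
        then have "b \<in> J1" using p ab True unfolding fib_def by blast
        then show ?thesis using ab True unfolding S1_def by simp
      next
        case False
        then have "p \<in> {p \<in> T. fst p \<noteq> x} \<union> {x} \<times> J" using p ab by simp
        then have "p \<in> S" unfolding T2 .
        then show ?thesis using False ab unfolding S1_def by simp
      qed
    qed
    then show "T = S1" using T by blast
  qed
qed




theorem mainTheorem4:
  fixes V :: "'a set" and E :: "'a \<Rightarrow> 'a \<Rightarrow> bool"
    and W :: "'b set" and F :: "'b \<Rightarrow> 'b \<Rightarrow> bool"
  assumes "graph V E" and "graph W F"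
    and "has_edge V E" and "has_edge W F"
  shows "well_bicovered (lex_vertices V W) (lex_edge E F) \<longleftrightarrow>
    (well_covered V E \<and>
     (well_covered W F \<and> well_bicovered W F \<and> bip_number W F = 2 * alpha W F))"
proof -
  note G = assms(1) and H = assms(2) and hH = assms(4)
  obtain x y where xy: "x \<in> V" "y \<in> V" "E x y" using assms(3) unfolding has_edge_def by blast
  obtain w where w: "w \<in> W" using assms(4) unfolding has_edge_def by blast
  have fV: "finite V" using graph_fin[OF G] .
  have fW: "finite W" using graph_fin[OF H] .
  have fVW: "finite (V \<times> W)" using fV fW by simp
  have "independent W F {}" unfolding independent_def by simp
  then have bW0: "bipartite_set W F {}" by (rule indep_bip)
  have "\<exists>M. {} \<subseteq> M \<and> bipartite_set W F M \<and> (\<forall>T. bipartite_set W F T \<and> M \<subseteq> T \<longrightarrow> T = M)"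
    by (rule max_ext[of W "bipartite_set W F" "{}", OF fW bip_sub[of W F] bW0])
  then obtain T0 where "bipartite_set W F T0" "\<forall>T. bipartite_set W F T \<and> T0 \<subseteq> T \<longrightarrow> T = T0"
    by (elim exE conjE) simp
  then have T0: "maximal_bipartite_set W F T0" unfolding maximal_bipartite_set_def by (intro conjI)
  have iV0: "independent V E {}" unfolding independent_def by simp
  have isub: "\<And>X. independent V E X \<Longrightarrow> X \<subseteq> V" unfolding independent_def by simp
  have "\<exists>M. {} \<subseteq> M \<and> independent V E M \<and> (\<forall>T. independent V E T \<and> M \<subseteq> T \<longrightarrow> T = M)"
    by (rule max_ext[of V "independent V E" "{}", OF fV isub iV0])
  then obtain A0 where "independent V E A0" "\<forall>T. independent V E T \<and> A0 \<subseteq> T \<longrightarrow> T = A0"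
    by (elim exE conjE) simp
  then have A0: "maximal_independent V E A0" unfolding maximal_independent_def by (intro conjI)
  have A0ne: "A0 \<noteq> {}" using maxind_nonempty[OF xy(1) G A0] .
  have fA0: "finite A0" using A0 fV unfolding maximal_independent_def independent_def
    using finite_subset by blast
  have cA0: "card A0 > 0" using A0ne fA0 by (simp add: card_gt_0_iff)
  have T0ne: "T0 \<noteq> {}" using maxbip_has_edge[OF H hH T0] by blast
  have fT0: "finite T0" using T0 fW unfolding maximal_bipartite_set_def bipartite_set_def
    using finite_subset by blast
  have cT0: "card T0 > 0" using T0ne fT0 by (simp add: card_gt_0_iff)
  show ?thesis unfolding lex_vertices_def
  proof
    assume wbc: "well_bicovered (V \<times> W) (lex_edge E F)"
    have eqc: "card (A1 \<times> T1) = card (A2 \<times> T2)"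
      if "maximal_independent V E A1" "maximal_bipartite_set W F T1"
         "maximal_independent V E A2" "maximal_bipartite_set W F T2" for A1 T1 A2 T2
      using wbc prod_max[OF G H hH that(1,2)] prod_max[OF G H hH that(3,4)]
      unfolding well_bicovered_def by blast
    have wcG: "well_covered V E" unfolding well_covered_def
    proof (intro allI impI)
      fix A1 A2 assume "maximal_independent V E A1 \<and> maximal_independent V E A2"
      then have "card (A1 \<times> T0) = card (A2 \<times> T0)" using eqc T0 by blast
      then have "card A1 * card T0 = card A2 * card T0" by (simp add: card_cartesian_product)
      then show "card A1 = card A2" using cT0 by simp
    qed
    have wbcH: "well_bicovered W F" unfolding well_bicovered_def
    proof (intro allI impI)
      fix T1 T2 assume "maximal_bipartite_set W F T1 \<and> maximal_bipartite_set W F T2"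
      then have "card (A0 \<times> T1) = card (A0 \<times> T2)" using eqc A0 by blast
      then have "card A0 * card T1 = card A0 * card T2" by (simp add: card_cartesian_product)
      then show "card T1 = card T2" using cA0 by simp
    qed
    have xyne: "x \<noteq> y" using xy(3) graph_irr[OF G] by blast
    define S0 where "S0 = {(x, w), (y, w)}"
    have S0b: "bipartite_set (V \<times> W) (lex_edge E F) S0" unfolding bipartite_set_def
    proof (intro conjI exI)
      show "S0 \<subseteq> V \<times> W" unfolding S0_def using xy w by simp
      show "{(x, w)} \<union> {(y, w)} = S0" unfolding S0_def by blast
      show "{(x, w)} \<inter> {(y, w)} = {}" using xyne by simp
      show "independent (V \<times> W) (lex_edge E F) {(x, w)}"
        unfolding independent_def lex_edge_def using xy w graph_irr[OF G] graph_irr[OF H] by simp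
      show "independent (V \<times> W) (lex_edge E F) {(y, w)}"
        unfolding independent_def lex_edge_def using xy w graph_irr[OF G] graph_irr[OF H] by simp
    qed
    have "\<exists>M. S0 \<subseteq> M \<and> bipartite_set (V \<times> W) (lex_edge E F) M \<and> (\<forall>T. bipartite_set (V \<times> W) (lex_edge E F) T \<and> M \<subseteq> T \<longrightarrow> T = M)"
      by (rule max_ext[of "V \<times> W" "bipartite_set (V \<times> W) (lex_edge E F)" S0, OF fVW bip_sub[of "V \<times> W" "lex_edge E F"] S0b])
    then obtain S where S0S: "S0 \<subseteq> S" and Sb: "bipartite_set (V \<times> W) (lex_edge E F) S"
      and Sm: "\<forall>T. bipartite_set (V \<times> W) (lex_edge E F) T \<and> S \<subseteq> T \<longrightarrow> T = S"
      by (elim exE conjE)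
    have S: "maximal_bipartite_set (V \<times> W) (lex_edge E F) S"
      unfolding maximal_bipartite_set_def using Sb Sm by (intro conjI)
    have xS: "x \<in> fst ` S" using S0S unfolding S0_def by force
    have yS: "y \<in> fst ` S" using S0S unfolding S0_def by force
    have xni: "x \<notin> iso E (fst ` S)" using yS xy(3) unfolding iso_def by blast
    define R where "R = {p \<in> S. fst p \<noteq> x}"
    have fS: "finite S" using finite_subset[OF bip_sub[OF Sb] fVW] .
    have fR: "finite R" using fS unfolding R_def by simp
    have cardswap: "card ({p \<in> S. fst p \<noteq> x} \<union> {x} \<times> J) = card R + card J" if "finite J" for J
    proof -
      have "R \<inter> {x} \<times> J = {}" unfolding R_def by auto
      then have "card (R \<union> {x} \<times> J) = card R + card ({x} \<times> J)"
        using card_Un_disjoint[OF fR] that by simp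
      then show ?thesis unfolding R_def by (simp add: card_cartesian_product)
    qed
    have Seq: "S = {p \<in> S. fst p \<noteq> x} \<union> {x} \<times> fib S x"
      unfolding fib_def by force
    have fJ: "finite J" if "maximal_independent W F J" for J
      using that fW unfolding maximal_independent_def independent_def using finite_subset by blast
    have Jm: "maximal_independent W F (fib S x)" using fib_max(2)[OF G S xS xni] .
    have cJ: "card J1 = card (fib S x)" if J1: "maximal_independent W F J1" for J1
    proof -
      have "card ({p \<in> S. fst p \<noteq> x} \<union> {x} \<times> J1) = card S"
        using wbc swap_max[OF G H w S xS xni J1] S unfolding well_bicovered_def by blast
      then have "card R + card J1 = card R + card (fib S x)"
        using cardswap[OF fJ[OF J1]] cardswap[OF fJ[OF Jm]] Seq by metis
      then show ?thesis by simp
    qed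
    have wcH: "well_covered W F" unfolding well_covered_def
      using cJ by metis
    have cf1: "card S = card (iso E (fst ` S)) * bip_number W F
           + (card (fst ` S) - card (iso E (fst ` S))) * alpha W F"
      using card_formula(1)[OF G H w S wcG wcH wbcH] .
    have cf2: "card (fst ` S) + card (iso E (fst ` S)) = 2 * alpha V E"
      using card_formula(2)[OF G H w S wcG wcH wbcH] .
    have "card (A0 \<times> T0) = card S"
      using wbc prod_max[OF G H hH A0 T0] S unfolding well_bicovered_def by blast
    then have cf3: "alpha V E * bip_number W F = card S"
      using wc_card[OF G wcG A0] wbc_card[OF H wbcH T0] by (simp add: card_cartesian_product)
    have fU: "finite (fst ` S)" using fS by simp
    have IU: "iso E (fst ` S) \<subseteq> fst ` S" unfolding iso_def by blast
    have "iso E (fst ` S) \<noteq> fst ` S" using xS xni by blast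
    then have lt: "card (iso E (fst ` S)) < card (fst ` S)" using psubset_card_mono[OF fU] IU by blast
    define i where "i = card (iso E (fst ` S))"
    define n where "n = card (fst ` S)"
    define g where "g = alpha V E"
    define b where "b = bip_number W F"
    define a where "a = alpha W F"
    have e1: "g * b = i * b + (n - i) * a" using cf1 cf3 unfolding i_def n_def g_def b_def a_def by simp
    have e2: "n + i = 2 * g" using cf2 unfolding i_def n_def g_def by simp
    have e3: "i < n" using lt unfolding i_def n_def .
    have "b = 2 * a"
    proof -
      obtain k where k: "n = i + k" "k > 0" using e3 by (metis add_diff_inverse_nat less_imp_add_positive)
      have "k = 2 * (g - i)" using e2 k by simp
      define d where "d = g - i"
      have d: "k = 2 * d" "g = i + d" "d > 0" using k e2 \<open>k = 2 * (g - i)\<close> unfolding d_def by simp_all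
      have "(i + d) * b = i * b + 2 * d * a" using e1 k d by simp
      then have "d * b = d * (2 * a)" by (simp add: algebra_simps)
      then show ?thesis using d(3) by simp
    qed
    then show "well_covered V E \<and> well_covered W F \<and> well_bicovered W F \<and> bip_number W F = 2 * alpha W F"
      using wcG wcH wbcH unfolding a_def b_def by blast
  next
    assume R: "well_covered V E \<and> well_covered W F \<and> well_bicovered W F \<and> bip_number W F = 2 * alpha W F"
    then have wcG: "well_covered V E" and wcH: "well_covered W F" and wbcH: "well_bicovered W F"
      and ba: "bip_number W F = 2 * alpha W F" by blast+
    have c: "card S = 2 * alpha V E * alpha W F"
      if S: "maximal_bipartite_set (V \<times> W) (lex_edge E F) S" for S
    proof -
      have cf1: "card S = card (iso E (fst ` S)) * bip_number W F
           + (card (fst ` S) - card (iso E (fst ` S))) * alpha W F"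
        using card_formula(1)[OF G H w S wcG wcH wbcH] .
      have cf2: "card (fst ` S) + card (iso E (fst ` S)) = 2 * alpha V E"
        using card_formula(2)[OF G H w S wcG wcH wbcH] .
      have IU: "iso E (fst ` S) \<subseteq> fst ` S" unfolding iso_def by blast
      have SV: "S \<subseteq> V \<times> W" using S unfolding maximal_bipartite_set_def using bip_sub by blast
      have fU: "finite (fst ` S)" using SV fVW finite_subset by (metis finite_imageI)
      have le: "card (iso E (fst ` S)) \<le> card (fst ` S)" using card_mono[OF fU IU] .
      define i where "i = card (iso E (fst ` S))"
      define n where "n = card (fst ` S)"
      have "card S = i * (2 * alpha W F) + (n - i) * alpha W F" using cf1 ba unfolding i_def n_def by simp
      also have "\<dots> = (n + i) * alpha W F" using le unfolding i_def[symmetric] n_def[symmetric]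
        by (simp add: algebra_simps)
      also have "\<dots> = 2 * alpha V E * alpha W F" using cf2 unfolding i_def n_def by simp
      finally show ?thesis .
    qed
    show "well_bicovered (V \<times> W) (lex_edge E F)" unfolding well_bicovered_def
      using c by metis
  qed
qed


end
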